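(* Let $\varepsilon>0$ and let $f\colon [N]\times[D]\to[M]$ be a $(k,\varepsilon)$-extractor. Then for every set $S\subseteq[N]$, fewer than $2^k$ elements of $S$ are $\varepsilon$-poor in $S$.
   Context: $[n]=\{1,\dots,n\}$. A function $f\colon [N]\times[D]\to[M]$ is a $(k,\varepsilon)$-extractor if for all $A\subseteq[N]$ with $|A|\ge 2^k$ and all $B\subseteq[M]$, $\left|\Pr\{f(X_A,X_D)\in B\} - |B|/M\right|\le\varepsilon$, where $X_A, X_D$ are independent uniformly random elements of $A$ and $[D]$. For $S\subseteq[N]$: an element $y\in[M]$ is $b$-bad for $S$ if $|f^{-1}(y)\cap S| > bD|S|/M$ (here $f^{-1}(y)=\{u\in[N]: f(u,i)=y \text{ for some } i\in[D]\}$); an element $x\in S$ is $\varepsilon$-poor in $S$ if for more than a $2\varepsilon$-fraction of $i\in[D]$ the value $f(x,i)$ is $(1/\varepsilon)$-bad for $S$. *)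

theory Defs
  imports Complex_Main
begin

text \<open>[n] = {1..n}. f :: nat => nat => nat represents f : [N] x [D] -> [M].
  Pr{f(X_A,X_D) in B} for independent uniform X_A in A, X_D in [D].\<close>

definition prob_ext :: "(nat \<Rightarrow> nat \<Rightarrow> nat) \<Rightarrow> nat \<Rightarrow> nat set \<Rightarrow> nat set \<Rightarrow> real" where
  "prob_ext f D A B = real (card {(a, i). a \<in> A \<and> i \<in> {1..D} \<and> f a i \<in> B}) / (real (card A) * real D)"

definition is_extractor ::
  "(nat \<Rightarrow> nat \<Rightarrow> nat) \<Rightarrow> nat \<Rightarrow> nat \<Rightarrow> nat \<Rightarrow> real \<Rightarrow> real \<Rightarrow> bool" where
  "is_extractor f N D M k \<epsilon> \<longleftrightarrow>
     (\<forall>A B. A \<subseteq> {1..N} \<longrightarrow> real (card A) \<ge> 2 powr k \<longrightarrow> B \<subseteq> {1..M} \<longrightarrow>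
        \<bar>prob_ext f D A B - real (card B) / real M\<bar> \<le> \<epsilon>)"

definition preimg :: "(nat \<Rightarrow> nat \<Rightarrow> nat) \<Rightarrow> nat \<Rightarrow> nat \<Rightarrow> nat \<Rightarrow> nat set" where
  "preimg f N D y = {u \<in> {1..N}. \<exists>i \<in> {1..D}. f u i = y}"

definition is_bad ::
  "(nat \<Rightarrow> nat \<Rightarrow> nat) \<Rightarrow> nat \<Rightarrow> nat \<Rightarrow> nat \<Rightarrow> real \<Rightarrow> nat set \<Rightarrow> nat \<Rightarrow> bool" where
  "is_bad f N D M b S y \<longleftrightarrow> y \<in> {1..M} \<and>
     real (card (preimg f N D y \<inter> S)) > b * real D * real (card S) / real M"

definition is_poor ::
  "(nat \<Rightarrow> nat \<Rightarrow> nat) \<Rightarrow> nat \<Rightarrow> nat \<Rightarrow> nat \<Rightarrow> real \<Rightarrow> nat set \<Rightarrow> nat \<Rightarrow> bool" where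
  "is_poor f N D M \<epsilon> S x \<longleftrightarrow> x \<in> S \<and>
     real (card {i \<in> {1..D}. is_bad f N D M (1 / \<epsilon>) S (f x i)}) > 2 * \<epsilon> * real D"

end

theory Submission
  imports Defs
begin

theorem lemma7:
  fixes f :: "nat \<Rightarrow> nat \<Rightarrow> nat" and N D M :: nat and k \<epsilon> :: real and S :: "nat set"
  assumes "\<epsilon> > 0"
    and "D > 0" and "M > 0"
    and "\<forall>u \<in> {1..N}. \<forall>i \<in> {1..D}. f u i \<in> {1..M}"
    and "is_extractor f N D M k \<epsilon>"
    and "S \<subseteq> {1..N}"
  shows "real (card {x \<in> S. is_poor f N D M \<epsilon> S x}) < 2 powr k"
proof (rule ccontr)
  assume nc: "\<not> ?thesis"
  define P where "P = {x \<in> S. is_poor f N D M \<epsilon> S x}"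
  define Bad where "Bad = {y \<in> {1..M}. is_bad f N D M (1/\<epsilon>) S y}"
  have finS: "finite S" using assms(6) finite_subset by blast
  have PS: "P \<subseteq> S" unfolding P_def by auto
  have finP: "finite P" using PS finS finite_subset by blast
  have cP: "real (card P) \<ge> 2 powr k" using nc P_def by auto
  have "(0::real) < 2 powr k" by simp
  hence "real (card P) > 0" using cP by linarith
  hence "card P > 0" by simp
  hence Pne: "P \<noteq> {}" by auto
  hence Sne: "card S > 0" using PS finS by (metis card_gt_0_iff subset_empty)
  have finB: "finite Bad" unfolding Bad_def by auto
  have ext: "\<bar>prob_ext f D P Bad - real (card Bad) / real M\<bar> \<le> \<epsilon>"
  proof -
    have "P \<subseteq> {1..N}" using PS assms(6) by auto
    moreover have "Bad \<subseteq> {1..M}" unfolding Bad_def by auto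
    ultimately show ?thesis using assms(5) cP unfolding is_extractor_def by blast
  qed
  define Cnt where "Cnt y = card (preimg f N D y \<inter> S)" for y
  have swap: "(\<Sum>y\<in>Bad. Cnt y) \<le> D * card S"
  proof -
    have "(\<Sum>y\<in>Bad. Cnt y) = (\<Sum>y\<in>Bad. \<Sum>x\<in>S. if x \<in> preimg f N D y then 1 else 0)"
      unfolding Cnt_def using finS
      by (intro sum.cong refl) (simp add: sum.inter_filter[symmetric] Int_def conj_commute)
    also have "\<dots> = (\<Sum>x\<in>S. \<Sum>y\<in>Bad. if x \<in> preimg f N D y then 1 else 0)"
      by (rule sum.swap)
    also have "\<dots> = (\<Sum>x\<in>S. card {y \<in> Bad. x \<in> preimg f N D y})"
      using finB by (intro sum.cong refl) (simp add: sum.inter_filter[symmetric])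
    also have "\<dots> \<le> (\<Sum>x\<in>S. D)"
    proof (rule sum_mono)
      fix x assume "x \<in> S"
      have "{y \<in> Bad. x \<in> preimg f N D y} \<subseteq> f x ` {1..D}"
        unfolding preimg_def by auto
      hence "card {y \<in> Bad. x \<in> preimg f N D y} \<le> card (f x ` {1..D})"
        by (simp add: card_mono)
      also have "\<dots> \<le> D" using card_image_le[of "{1..D}" "f x"] by simp
      finally show "card {y \<in> Bad. x \<in> preimg f N D y} \<le> D" .
    qed
    finally show ?thesis by (simp add: mult.commute)
  qed
  define c where "c = (1/\<epsilon>) * real D * real (card S) / real M"
  have cpos: "c > 0" unfolding c_def using assms(1-3) Sne by simp
  have bB: "real (card Bad) < \<epsilon> * real M"
  proof (cases "Bad = {}")
    case True thus ?thesis using assms(1,3) by simp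
  next
    case False
    have "(\<Sum>y\<in>Bad. c) < (\<Sum>y\<in>Bad. real (Cnt y))"
      using finB False by (intro sum_strict_mono) (auto simp: Bad_def is_bad_def Cnt_def c_def)
    also have "\<dots> \<le> real D * real (card S)"
      using swap by (metis of_nat_le_iff of_nat_mult of_nat_sum)
    finally have "real (card Bad) * c < real D * real (card S)" by simp
    moreover have "real (card Bad) * c = (real (card Bad) / (\<epsilon> * real M)) * (real D * real (card S))"
      unfolding c_def by (simp add: field_simps)
    ultimately have "(real (card Bad) / (\<epsilon> * real M)) * (real D * real (card S)) < 1 * (real D * real (card S))"
      by simp
    hence "real (card Bad) / (\<epsilon> * real M) < 1"
      by (rule mult_right_less_imp_less) simp
    hence "real (card Bad) * (1/\<epsilon>) / real M < 1" by simp
    thus ?thesis using assms(1,3) by (simp add: field_simps)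
  qed
  have pairs: "{(a, i). a \<in> P \<and> i \<in> {1..D} \<and> f a i \<in> Bad} = Sigma P (\<lambda>a. {i \<in> {1..D}. f a i \<in> Bad})"
    by auto
  have cnt: "real (card {(a, i). a \<in> P \<and> i \<in> {1..D} \<and> f a i \<in> Bad})
      = (\<Sum>a\<in>P. real (card {i \<in> {1..D}. f a i \<in> Bad}))"
    unfolding pairs using finP by (simp add: card_SigmaI)
  have "(\<Sum>a\<in>P. 2 * \<epsilon> * real D) < (\<Sum>a\<in>P. real (card {i \<in> {1..D}. f a i \<in> Bad}))"
  proof (intro sum_strict_mono finP Pne)
    fix a assume "a \<in> P"
    hence "a \<in> S" and pa: "real (card {i \<in> {1..D}. is_bad f N D M (1 / \<epsilon>) S (f a i)}) > 2 * \<epsilon> * real D"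
      unfolding P_def is_poor_def by auto
    have "{i \<in> {1..D}. is_bad f N D M (1 / \<epsilon>) S (f a i)} = {i \<in> {1..D}. f a i \<in> Bad}"
      unfolding Bad_def is_bad_def by auto
    thus "2 * \<epsilon> * real D < real (card {i \<in> {1..D}. f a i \<in> Bad})" using pa by simp
  qed
  hence "2 * \<epsilon> * real D * real (card P) < real (card {(a, i). a \<in> P \<and> i \<in> {1..D} \<and> f a i \<in> Bad})"
    using cnt by (simp add: mult.commute)
  hence "prob_ext f D P Bad > 2 * \<epsilon>"
    unfolding prob_ext_def using assms(2) \<open>card P > 0\<close> by (simp add: field_simps)
  moreover have "real (card Bad) / real M < \<epsilon>" using bB assms(3) by (simp add: field_simps)
  ultimately show False using ext by linarith
qed

end
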